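(* Let $n\ge 2$ and let $f=(f_1,\dots,f_n):\mathbb{R}^n\to\mathbb{R}^n$. Then $f$ is a Laplacian map if and only if there exist a function $g\in C^2(\mathbb{R}^{n-1})$, with variables $(t_1,\dots,t_{n-1})$, and a constant $k\in\mathbb{R}$ such that \[ f_i(x_1,\dots,x_n)=\frac{\partial g}{\partial t_i}(x_1-x_n,\dots,x_{n-1}-x_n),\quad i=1,\dots,n-1, \] \[ f_n=-f_1-\dots-f_{n-1}+k. \]
   Context: A real $n\times n$ matrix $L=(l_{ij})$ is a Laplacian matrix if it is symmetric and $l_{ii}=-\sum_{j\neq i} l_{ij}$ for $i=1,\dots,n$. A map $f:\mathbb{R}^n\to\mathbb{R}^n$ of class $C^1$ is a Laplacian map if its Jacobian matrix $Jf(x)$ is a Laplacian matrix for every $x\in\mathbb{R}^n$. *)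

theory Defs
  imports "HOL-Analysis.Analysis"
begin

definition C1_map :: "('a::real_normed_vector \<Rightarrow> 'b::real_normed_vector) \<Rightarrow> bool" where
  "C1_map f \<longleftrightarrow> (\<exists>f'. (\<forall>x. (f has_derivative blinfun_apply (f' x)) (at x)) \<and> continuous_on UNIV f')"

definition C2_map :: "('a::real_normed_vector \<Rightarrow> 'b::real_normed_vector) \<Rightarrow> bool" where
  "C2_map f \<longleftrightarrow> (\<exists>f'. (\<forall>x. (f has_derivative blinfun_apply (f' x)) (at x)) \<and> C1_map f')"

definition laplacian_matrix :: "real^'n^'n \<Rightarrow> bool" where
  "laplacian_matrix L \<longleftrightarrow> transpose L = L \<and>
     (\<forall>i. L $ i $ i = - (\<Sum>j\<in>UNIV - {i}. L $ i $ j))"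

definition laplacian_map :: "(real^'n \<Rightarrow> real^'n) \<Rightarrow> bool" where
  "laplacian_map f \<longleftrightarrow> C1_map f \<and> (\<forall>x. laplacian_matrix (jacobian f (at x)))"

definition partial_deriv :: "(real^'m \<Rightarrow> real) \<Rightarrow> 'm \<Rightarrow> real^'m \<Rightarrow> real" where
  "partial_deriv g i y = deriv (\<lambda>t. g (y + t *\<^sub>R axis i 1)) 0"

end

theory Submission
  imports Defs
begin

lemma mixed_mvt:
  fixes g :: "'a::real_normed_vector \<Rightarrow> real"
  assumes d1: "\<And>y. (g has_derivative blinfun_apply (g' y)) (at y)"
    and d2: "\<And>y. (g' has_derivative blinfun_apply (g'' y)) (at y)"
    and t: "t > 0"
  shows "\<exists>z. norm (z - x) \<le> t * (norm u + norm v) \<and>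
    g (x + t *\<^sub>R u + t *\<^sub>R v) - g (x + t *\<^sub>R u) - g (x + t *\<^sub>R v) + g x
     = t^2 * blinfun_apply (blinfun_apply (g'' z) v) u"
proof -
  define \<psi> where "\<psi> s = g (x + s *\<^sub>R u + t *\<^sub>R v) - g (x + s *\<^sub>R u)" for s
  have dpsi: "(\<psi> has_derivative (\<lambda>h. h * (blinfun_apply (g' (x + s *\<^sub>R u + t *\<^sub>R v)) u
        - blinfun_apply (g' (x + s *\<^sub>R u)) u))) (at s within {0..t})" for s
  proof -
    have a: "((\<lambda>s. x + s *\<^sub>R u + t *\<^sub>R v) has_derivative (\<lambda>h. h *\<^sub>R u)) (at s)"
      by (intro derivative_eq_intros) auto
    have b: "((\<lambda>s. x + s *\<^sub>R u) has_derivative (\<lambda>h. h *\<^sub>R u)) (at s)"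
      by (intro derivative_eq_intros) auto
    have "(\<psi> has_derivative (\<lambda>h. blinfun_apply (g' (x + s *\<^sub>R u + t *\<^sub>R v)) (h *\<^sub>R u)
        - blinfun_apply (g' (x + s *\<^sub>R u)) (h *\<^sub>R u))) (at s)"
      unfolding \<psi>_def
      by (rule has_derivative_diff[OF has_derivative_compose[OF a d1] has_derivative_compose[OF b d1]])
    note X = this
    show ?thesis
      by (rule has_derivative_at_withinI) (use X in \<open>simp add: blinfun.scaleR_right right_diff_distrib\<close>)
  qed
  obtain \<xi> where xi: "\<xi> \<in> {0<..<t}" and e1: "\<psi> t - \<psi> 0 = (t - 0) * (blinfun_apply (g' (x + \<xi> *\<^sub>R u + t *\<^sub>R v)) u
        - blinfun_apply (g' (x + \<xi> *\<^sub>R u)) u)"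
    using mvt_simple[OF t dpsi] by (elim bexE) (rule that, assumption+)
  define ch where "ch \<tau> = blinfun_apply (g' (x + \<xi> *\<^sub>R u + \<tau> *\<^sub>R v)) u" for \<tau>
  have dchi: "(ch has_derivative (\<lambda>h. h * blinfun_apply (blinfun_apply (g'' (x + \<xi> *\<^sub>R u + \<tau> *\<^sub>R v)) v) u)) (at \<tau> within {0..t})" for \<tau>
  proof -
    have a: "((\<lambda>s. x + \<xi> *\<^sub>R u + s *\<^sub>R v) has_derivative (\<lambda>h. h *\<^sub>R v)) (at \<tau>)"
      by (intro derivative_eq_intros) auto
    have "((\<lambda>s. g' (x + \<xi> *\<^sub>R u + s *\<^sub>R v)) has_derivative (\<lambda>h. blinfun_apply (g'' (x + \<xi> *\<^sub>R u + \<tau> *\<^sub>R v)) (h *\<^sub>R v))) (at \<tau>)"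
      by (rule has_derivative_compose[OF a d2])
    then have "(ch has_derivative (\<lambda>h. blinfun_apply (blinfun_apply (g'' (x + \<xi> *\<^sub>R u + \<tau> *\<^sub>R v)) (h *\<^sub>R v)) u)) (at \<tau>)"
      unfolding ch_def by (rule blinfun.FDERIV[OF _ has_derivative_const, simplified])
    note X = this
    show ?thesis
      by (rule has_derivative_at_withinI) (use X in \<open>simp add: blinfun.scaleR_right blinfun.scaleR_left\<close>)
  qed
  obtain \<eta> where eta: "\<eta> \<in> {0<..<t}" and e2: "ch t - ch 0 = (t - 0) * blinfun_apply (blinfun_apply (g'' (x + \<xi> *\<^sub>R u + \<eta> *\<^sub>R v)) v) u"
    using mvt_simple[OF t dchi] by (elim bexE) (rule that, assumption+)
  define z where "z = x + \<xi> *\<^sub>R u + \<eta> *\<^sub>R v"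
  have "norm (z - x) \<le> norm (\<xi> *\<^sub>R u) + norm (\<eta> *\<^sub>R v)"
  proof -
    have "z - x = \<xi> *\<^sub>R u + \<eta> *\<^sub>R v" unfolding z_def by simp
    then show ?thesis by (simp only: norm_triangle_ineq)
  qed
  also have "\<dots> \<le> t * norm u + t * norm v"
    using xi eta by (auto intro!: add_mono mult_right_mono)
  finally have n: "norm (z - x) \<le> t * (norm u + norm v)" by (simp add: algebra_simps)
  have "g (x + t *\<^sub>R u + t *\<^sub>R v) - g (x + t *\<^sub>R u) - g (x + t *\<^sub>R v) + g x = \<psi> t - \<psi> 0"
    unfolding \<psi>_def by simp
  also have "\<dots> = t * (ch t - ch 0)" using e1 unfolding ch_def by simp
  also have "\<dots> = t^2 * blinfun_apply (blinfun_apply (g'' z) v) u"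
    using e2 unfolding z_def by (simp add: power2_eq_square)
  finally show ?thesis using n by (intro exI[of _ z] conjI)
qed

lemma schwarz:
  fixes g :: "'a::real_normed_vector \<Rightarrow> real"
  assumes d1: "\<And>y. (g has_derivative blinfun_apply (g' y)) (at y)"
    and d2: "\<And>y. (g' has_derivative blinfun_apply (g'' y)) (at y)"
    and c: "continuous_on UNIV g''"
  shows "blinfun_apply (blinfun_apply (g'' x) u) v = blinfun_apply (blinfun_apply (g'' x) v) u"
proof (rule ccontr)
  let ?B = "\<lambda>z a b. blinfun_apply (blinfun_apply (g'' z) a) b"
  assume neq: "?B x u v \<noteq> ?B x v u"
  define d where "d = \<bar>?B x v u - ?B x u v\<bar>"
  have dpos: "d > 0" using neq unfolding d_def by auto
  define e where "e = d / (2 * (norm u * norm v + 1))"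
  have epos: "e > 0" unfolding e_def using dpos by (simp add: add_nonneg_pos)
  have "isCont g'' x" using c by (simp add: continuous_on_eq_continuous_at)
  then obtain \<delta> where dl: "\<delta> > 0" and dlp: "\<And>z. dist z x < \<delta> \<Longrightarrow> dist (g'' z) (g'' x) < e"
    using epos unfolding continuous_at_eps_delta by metis
  have bnd: "\<bar>?B z a b - ?B x a b\<bar> \<le> e * (norm a * norm b)" if "dist z x < \<delta>" for z a b
  proof -
    have "?B z a b - ?B x a b = blinfun_apply (blinfun_apply (g'' z - g'' x) a) b"
      by (simp add: blinfun.diff_left)
    also have "\<bar>\<dots>\<bar> \<le> norm (blinfun_apply (g'' z - g'' x) a) * norm b"
      using norm_blinfun[of "blinfun_apply (g'' z - g'' x) a" b] by simp
    also have "\<dots> \<le> (norm (g'' z - g'' x) * norm a) * norm b"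
      by (intro mult_right_mono norm_blinfun) auto
    also have "\<dots> \<le> e * (norm a * norm b)"
      using dlp[OF that] by (simp add: dist_norm mult.assoc mult_right_mono)
    finally show ?thesis .
  qed
  define t where "t = \<delta> / (2 * (norm u + norm v + 1))"
  have tpos: "t > 0" unfolding t_def using dl by (simp add: add_nonneg_pos)
  have tsmall: "t * (norm u + norm v) < \<delta>"
  proof -
    have "t * (norm u + norm v) \<le> t * (norm u + norm v + 1)" using tpos by simp
    also have "\<dots> = \<delta> / 2"
    proof -
      have "norm u + norm v + 1 > 0" by (simp add: add_nonneg_pos)
      then show ?thesis unfolding t_def by (simp add: field_simps)
    qed
    finally show ?thesis using dl by simp
  qed
  obtain z1 where z1: "norm (z1 - x) \<le> t * (norm u + norm v)"
    "g (x + t *\<^sub>R u + t *\<^sub>R v) - g (x + t *\<^sub>R u) - g (x + t *\<^sub>R v) + g x = t^2 * ?B z1 v u"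
    using mixed_mvt[OF d1 d2 tpos, of x u v] by (elim exE conjE) (rule that, assumption+)
  obtain z2 where z2: "norm (z2 - x) \<le> t * (norm v + norm u)"
    "g (x + t *\<^sub>R v + t *\<^sub>R u) - g (x + t *\<^sub>R v) - g (x + t *\<^sub>R u) + g x = t^2 * ?B z2 u v"
    using mixed_mvt[OF d1 d2 tpos, of x v u] by (elim exE conjE) (rule that, assumption+)
  have sw: "x + t *\<^sub>R v + t *\<^sub>R u = x + t *\<^sub>R u + t *\<^sub>R v" by (simp add: algebra_simps)
  have "t^2 * ?B z1 v u = t^2 * ?B z2 u v"
    using z1(2) z2(2) unfolding sw by linarith
  then have eq: "?B z1 v u = ?B z2 u v" using tpos by simp
  have nn: "norm v * norm u = norm u * norm v" by (rule mult.commute)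
  have "dist z1 x < \<delta>" "dist z2 x < \<delta>"
    using z1(1) z2(1) tsmall unfolding dist_norm by (simp_all add: add.commute)
  from bnd[OF this(1), of v u] bnd[OF this(2), of u v]
  have "d \<le> 2 * e * (norm u * norm v)"
    unfolding d_def nn abs_le_iff using eq by linarith
  also have "\<dots> < d"
  proof -
    have "2 * e * (norm u * norm v) = d * (norm u * norm v) / (norm u * norm v + 1)"
    proof -
      have "norm u * norm v + 1 > 0" by (simp add: add_nonneg_pos)
      then show ?thesis unfolding e_def by (simp add: field_simps)
    qed
    also have "\<dots> < d" using dpos by (simp add: add_nonneg_pos divide_less_eq)
    finally show ?thesis .
  qed
  finally show False by simp
qed


definition Pm :: "real^'m \<Rightarrow> real^('m option)" where
  "Pm y = (\<chi> p. case p of None \<Rightarrow> 0 | Some j \<Rightarrow> y $ j)"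

definition Am :: "real^('m option) \<Rightarrow> real^'m" where
  "Am x = (\<chi> j. x $ Some j - x $ None)"

lemma linear_Pm: "linear Pm"
  by (rule linearI) (auto simp: Pm_def vec_eq_iff split: option.splits)

lemma linear_Am: "linear Am"
  by (rule linearI) (auto simp: Am_def vec_eq_iff algebra_simps)

lemma bl_Pm: "bounded_linear Pm"
  using linear_Pm linear_conv_bounded_linear by blast

lemma bl_Am: "bounded_linear Am"
  using linear_Am linear_conv_bounded_linear by blast

lemma Am_Pm[simp]: "Am (Pm y) = y"
  by (simp add: Am_def Pm_def vec_eq_iff)

lemma decomp: "x = Pm (Am x) + (x $ None) *\<^sub>R (\<chi> p. 1)"
  by (simp add: Am_def Pm_def vec_eq_iff split: option.splits)

lemma Am_one[simp]: "Am (\<chi> p. 1) = 0"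
  by (simp add: Am_def vec_eq_iff)

lemma Am_axis_Some[simp]: "Am (axis (Some i) 1) = axis i 1"
  by (simp add: Am_def vec_eq_iff axis_def)

lemma Pm_axis[simp]: "Pm (axis i 1) = axis (Some i) 1"
  by (simp add: Pm_def vec_eq_iff axis_def split: option.splits)

lemma one_sum: "((\<chi> j. 1) :: real^'n) = (\<Sum>i\<in>UNIV. axis i 1)"
  by (simp add: vec_eq_iff axis_def)

lemma Am_axis_None[simp]: "Am (axis None 1) = - (\<Sum>i\<in>UNIV. axis i 1)"
  by (simp add: Am_def vec_eq_iff axis_def)

lemma sum_option: "(\<Sum>p\<in>UNIV. h p) = h None + (\<Sum>i\<in>UNIV. h (Some i))"
  for h :: "'m::finite option \<Rightarrow> real"
  by (simp add: UNIV_option_conv sum.reindex)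

lemma partial_deriv_eq:
  assumes "(g has_derivative blinfun_apply G) (at y)"
  shows "partial_deriv g i y = blinfun_apply G (axis i 1)"
proof -
  have a: "((\<lambda>t. y + t *\<^sub>R axis i 1) has_derivative (\<lambda>h. h *\<^sub>R axis i 1)) (at 0)"
    by (intro derivative_eq_intros) auto
  have "((\<lambda>t. g (y + t *\<^sub>R axis i 1)) has_derivative (\<lambda>h. blinfun_apply G (h *\<^sub>R axis i 1))) (at 0)"
    using has_derivative_compose[OF a] assms by simp
  then have "((\<lambda>t. g (y + t *\<^sub>R axis i 1)) has_field_derivative blinfun_apply G (axis i 1)) (at 0)"
    unfolding has_field_derivative_def
    by (simp add: blinfun.scaleR_right mult.commute[of _ "blinfun_apply G (axis i 1)"])
  then show ?thesis unfolding partial_deriv_def by (rule DERIV_imp_deriv)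
qed

lemma jac_entry:
  assumes "(f has_derivative blinfun_apply F) (at x)"
  shows "jacobian f (at x) $ i $ j = blinfun_apply F (axis j 1) $ i"
  using frechet_derivative_at[OF assms] by (simp add: jacobian_def matrix_def)


definition Psi :: "((real^'m) \<Rightarrow>\<^sub>L real) \<Rightarrow> real^('m option)" where
  "Psi L = (\<Sum>p\<in>UNIV. blinfun_apply L (Am (axis p 1)) *\<^sub>R axis p 1)"

lemma Psi_nth[simp]: "Psi L $ q = blinfun_apply L (Am (axis q 1))"
  by (simp add: Psi_def axis_def if_distrib cong: if_cong)

lemma bl_Psi: "bounded_linear Psi"
  unfolding Psi_def
  by (intro bounded_linear_sum bounded_linear_compose[OF bounded_linear_scaleR_left blinfun.bounded_linear_left])

lemma converse_dir:
  fixes f :: "real^('m::finite option) \<Rightarrow> real^('m option)" and g :: "real^'m \<Rightarrow> real"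
  assumes C2: "C2_map g"
    and hS: "\<forall>x i. f x $ Some i = partial_deriv g i (\<chi> j. x $ Some j - x $ None)"
    and hN: "\<forall>x. f x $ None = - (\<Sum>i\<in>UNIV. f x $ Some i) + k"
  shows "laplacian_map f"
proof -
  obtain g' where d1: "\<forall>x. (g has_derivative blinfun_apply (g' x)) (at x)" and C1: "C1_map g'"
    using C2 unfolding C2_map_def by blast
  obtain g'' where d2: "\<forall>x. (g' has_derivative blinfun_apply (g'' x)) (at x)" and c2: "continuous_on UNIV g''"
    using C1 unfolding C1_map_def by blast
  have fS: "f x $ Some i = blinfun_apply (g' (Am x)) (axis i 1)" for x i
    using hS partial_deriv_eq[OF d1[rule_format]] unfolding Am_def by simp
  have feq: "f x = k *\<^sub>R axis None 1 + Psi (g' (Am x))" for x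
  proof (subst vec_eq_iff, intro allI)
    fix p show "f x $ p = (k *\<^sub>R axis None 1 + Psi (g' (Am x))) $ p"
    proof (cases p)
      case None
      have "blinfun_apply (g' (Am x)) (- (\<Sum>i\<in>UNIV. axis i 1)) = - (\<Sum>i\<in>UNIV. blinfun_apply (g' (Am x)) (axis i 1))"
        by (simp add: blinfun.minus_right blinfun.sum_right)
      then show ?thesis using None hN fS by simp
    next
      case (Some i)
      have "axis None 1 $ Some i = (0::real)" by (simp add: axis_def)
      then show ?thesis using fS Some by simp
    qed
  qed
  have feq': "f = (\<lambda>x. k *\<^sub>R axis None 1 + Psi (g' (Am x)))"
    by (rule ext) (rule feq)
  define F where "F x = Blinfun Psi o\<^sub>L g'' (Am x) o\<^sub>L Blinfun Am" for x
  have Fapp: "blinfun_apply (F x) = (\<lambda>h. Psi (blinfun_apply (g'' (Am x)) (Am h)))" for x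
    by (rule ext) (simp add: F_def bounded_linear_Blinfun_apply bl_Psi bl_Am)
  have df: "(f has_derivative blinfun_apply (F x)) (at x)" for x
  proof -
    have a: "(Am has_derivative Am) (at x)" using bl_Am by (rule bounded_linear_imp_has_derivative)
    have b: "((\<lambda>x. g' (Am x)) has_derivative (\<lambda>h. g'' (Am x) (Am h))) (at x)"
      using has_derivative_compose[OF a d2[rule_format]] .
    have c: "((\<lambda>x. Psi (g' (Am x))) has_derivative (\<lambda>h. Psi (g'' (Am x) (Am h)))) (at x)"
      using bounded_linear.has_derivative[OF bl_Psi b] .
    have "((\<lambda>x. k *\<^sub>R axis None 1 + Psi (g' (Am x))) has_derivative (\<lambda>h. 0 + Psi (g'' (Am x) (Am h)))) (at x)"
      by (rule has_derivative_add[OF has_derivative_const c])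
    then show ?thesis unfolding feq' Fapp by simp
  qed
  have cAm: "continuous_on UNIV Am" using bl_Am by (rule linear_continuous_on)
  have cg: "continuous_on UNIV (\<lambda>x. g'' (Am x))"
    by (rule continuous_on_compose2[OF c2 cAm]) auto
  have cF: "continuous_on UNIV F" unfolding F_def
    by (intro continuous_intros cg)
  have C1f: "C1_map f" unfolding C1_map_def using df cF by blast
  have J: "jacobian f (at x) $ p $ q = blinfun_apply (blinfun_apply (g'' (Am x)) (Am (axis q 1))) (Am (axis p 1))" for x p q
    using jac_entry[OF df] by (simp add: Fapp)
  have sym: "blinfun_apply (blinfun_apply (g'' z) a) b = blinfun_apply (blinfun_apply (g'' z) b) a" for z a b
    by (rule schwarz[OF d1[rule_format] d2[rule_format] c2])
  have rows: "(\<Sum>q\<in>UNIV. jacobian f (at x) $ p $ q) = 0" for x p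
  proof -
    have "(\<Sum>q\<in>UNIV. jacobian f (at x) $ p $ q)
       = blinfun_apply (blinfun_apply (g'' (Am x)) (\<Sum>q\<in>UNIV. Am (axis q 1))) (Am (axis p 1))"
      unfolding J by (simp add: blinfun.sum_right blinfun.sum_left)
    also have "(\<Sum>q\<in>UNIV. Am (axis q 1)) = Am (\<Sum>q\<in>UNIV. axis q 1)"
      by (rule linear_sum[OF linear_Am, symmetric])
    also have "\<dots> = 0" by (simp add: one_sum[symmetric])
    finally show ?thesis by simp
  qed
  have "laplacian_matrix (jacobian f (at x))" for x
    unfolding laplacian_matrix_def
  proof (intro conjI allI)
    show "transpose (jacobian f (at x)) = jacobian f (at x)"
      by (simp add: transpose_def vec_eq_iff J sym)
    fix i
    have "(\<Sum>q\<in>UNIV. jacobian f (at x) $ i $ q) = jacobian f (at x) $ i $ i + (\<Sum>q\<in>UNIV - {i}. jacobian f (at x) $ i $ q)"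
      by (rule sum.remove) auto
    then show "jacobian f (at x) $ i $ i = - (\<Sum>j\<in>UNIV - {i}. jacobian f (at x) $ i $ j)"
      using rows[of x i] by simp
  qed
  then show ?thesis unfolding laplacian_map_def using C1f by blast
qed


lemma forward_facts:
  fixes f :: "real^('m::finite option) \<Rightarrow> real^('m option)"
  assumes df: "\<And>x. (f has_derivative blinfun_apply (f' x)) (at x)"
    and lap: "\<And>x. laplacian_matrix (jacobian f (at x))"
  shows "blinfun_apply (f' x) a \<bullet> b = blinfun_apply (f' x) b \<bullet> a"
    and "blinfun_apply (f' x) (\<chi> p. 1) = 0"
proof -
  define M where "M i j = blinfun_apply (f' x) (axis j 1) $ i" for i j
  have J: "jacobian f (at x) $ i $ j = M i j" for i j
    unfolding M_def by (rule jac_entry[OF df])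
  have symM: "M i j = M j i" for i j
  proof -
    have "transpose (jacobian f (at x)) = jacobian f (at x)"
      using lap[of x] unfolding laplacian_matrix_def by blast
    then have "transpose (jacobian f (at x)) $ i $ j = jacobian f (at x) $ i $ j" by simp
    then show ?thesis by (simp add: transpose_def J)
  qed
  have rowM: "(\<Sum>j\<in>UNIV. M i j) = 0" for i
  proof -
    have d: "jacobian f (at x) $ i $ i = - (\<Sum>j\<in>UNIV - {i}. jacobian f (at x) $ i $ j)"
      using lap[of x] unfolding laplacian_matrix_def by blast
    have "(\<Sum>j\<in>UNIV. M i j) = M i i + (\<Sum>j\<in>UNIV - {i}. M i j)"
      by (rule sum.remove) auto
    then show ?thesis using d by (simp add: J)
  qed
  have comp: "blinfun_apply (f' x) a $ i = (\<Sum>j\<in>UNIV. a $ j * M i j)" for a i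
  proof -
    have "a = (\<Sum>j\<in>UNIV. a $ j *\<^sub>R axis j 1)"
      using basis_expansion[of a] by (simp add: scalar_mult_eq_scaleR)
    then have "blinfun_apply (f' x) a = (\<Sum>j\<in>UNIV. a $ j *\<^sub>R blinfun_apply (f' x) (axis j 1))"
      by (metis (no_types, lifting) blinfun.scaleR_right blinfun.sum_right sum.cong)
    then show ?thesis by (simp add: M_def)
  qed
  have "blinfun_apply (f' x) a \<bullet> b = (\<Sum>i\<in>UNIV. \<Sum>j\<in>UNIV. a $ j * M i j * b $ i)"
    by (simp add: inner_vec_def comp sum_distrib_right)
  also have "\<dots> = (\<Sum>j\<in>UNIV. \<Sum>i\<in>UNIV. a $ j * M i j * b $ i)"
    by (rule sum.swap)
  also have "\<dots> = (\<Sum>j\<in>UNIV. \<Sum>i\<in>UNIV. b $ i * M j i * a $ j)"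
    by (simp add: symM mult.commute mult.left_commute)
  also have "\<dots> = blinfun_apply (f' x) b \<bullet> a"
    by (simp add: inner_vec_def comp sum_distrib_right)
  finally show "blinfun_apply (f' x) a \<bullet> b = blinfun_apply (f' x) b \<bullet> a" .
  show "blinfun_apply (f' x) (\<chi> p. 1) = 0"
    by (simp add: vec_eq_iff comp rowM)
qed

lemma translation_inv:
  fixes f :: "real^('m::finite option) \<Rightarrow> real^('m option)"
  assumes df: "\<And>x. (f has_derivative blinfun_apply (f' x)) (at x)"
    and one: "\<And>x. blinfun_apply (f' x) (\<chi> p. 1) = 0"
  shows "f (z + t *\<^sub>R (\<chi> p. 1)) = f z"
proof -
  have "((\<lambda>t. f (z + t *\<^sub>R (\<chi> p. 1))) has_derivative (\<lambda>h. 0)) (at s within UNIV)" for s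
  proof -
    have a: "((\<lambda>t. z + t *\<^sub>R (\<chi> p. 1)) has_derivative (\<lambda>h. h *\<^sub>R (\<chi> p. 1))) (at s)"
      by (intro derivative_eq_intros) auto
    have "((\<lambda>t. f (z + t *\<^sub>R (\<chi> p. 1))) has_derivative (\<lambda>h. blinfun_apply (f' (z + s *\<^sub>R (\<chi> p. 1))) (h *\<^sub>R (\<chi> p. 1)))) (at s)"
      by (rule has_derivative_compose[OF a df])
    then show ?thesis by (simp add: blinfun.scaleR_right one)
  qed
  then obtain c where "\<forall>t\<in>UNIV. f (z + t *\<^sub>R (\<chi> p. 1)) = c"
    using has_derivative_zero_constant[of UNIV] by blast
  then show ?thesis by (metis add_0_right scale_zero_left UNIV_I)
qed

lemma sum_const:
  fixes f :: "real^('m::finite option) \<Rightarrow> real^('m option)"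
  assumes df: "\<And>x. (f has_derivative blinfun_apply (f' x)) (at x)"
    and sym: "\<And>x a b. blinfun_apply (f' x) a \<bullet> b = blinfun_apply (f' x) b \<bullet> a"
    and one: "\<And>x. blinfun_apply (f' x) (\<chi> p. 1) = 0"
  shows "\<exists>c. \<forall>x. (\<Sum>p\<in>UNIV. f x $ p) = c"
proof -
  have "((\<lambda>x. f x \<bullet> (\<chi> p. 1)) has_derivative (\<lambda>h. 0)) (at x within UNIV)" for x
  proof -
    have "((\<lambda>x. f x \<bullet> (\<chi> p. 1)) has_derivative (\<lambda>h. blinfun_apply (f' x) h \<bullet> (\<chi> p. 1))) (at x)"
      by (rule has_derivative_inner_left[OF df])
    moreover have "(\<lambda>h. blinfun_apply (f' x) h \<bullet> (\<chi> p. 1)) = (\<lambda>h. 0)"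
      by (rule ext) (subst sym, simp add: one)
    ultimately show ?thesis by simp
  qed
  then obtain c where "\<forall>x\<in>UNIV. f x \<bullet> (\<chi> p. 1) = c"
    using has_derivative_zero_constant[of UNIV] by blast
  then show ?thesis by (intro exI[of _ c]) (simp add: inner_vec_def)
qed


lemma potential:
  fixes f :: "real^('m::finite option) \<Rightarrow> real^('m option)"
  assumes df: "\<And>x. (f has_derivative blinfun_apply (f' x)) (at x)"
    and cf: "continuous_on UNIV f'"
    and sym: "\<And>x a b. blinfun_apply (f' x) a \<bullet> b = blinfun_apply (f' x) b \<bullet> a"
  shows "\<exists>g. C2_map g \<and> (\<forall>y i. partial_deriv g i y = f (Pm y) $ Some i)"
proof -
  define G where "G y = blinfun_inner_right (f (Pm y)) o\<^sub>L Blinfun Pm" for y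
  have Gapp: "blinfun_apply (G y) v = f (Pm y) \<bullet> Pm v" for y v
    by (simp add: G_def bounded_linear_Blinfun_apply bl_Pm)
  have cfun: "continuous_on UNIV f"
    using has_derivative_continuous[OF df] by (simp add: continuous_on_eq_continuous_at)
  have cPm: "continuous_on UNIV Pm" by (rule linear_continuous_on[OF bl_Pm])
  define g where "g y = integral (cbox 0 1) (\<lambda>s. f (Pm (s *\<^sub>R y)) \<bullet> Pm y)" for y :: "real^'m"
  define fx where "fx y s = s *\<^sub>R (blinfun_inner_left (Pm y) o\<^sub>L f' (Pm (s *\<^sub>R y)) o\<^sub>L Blinfun Pm)
      + (blinfun_inner_right (f (Pm (s *\<^sub>R y))) o\<^sub>L Blinfun Pm)" for y s
  have fxapp: "blinfun_apply (fx y s) v = s * (blinfun_apply (f' (Pm (s *\<^sub>R y))) (Pm v) \<bullet> Pm y) + f (Pm (s *\<^sub>R y)) \<bullet> Pm v" for y s v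
    by (simp add: fx_def bounded_linear_Blinfun_apply bl_Pm blinfun.add_left blinfun.scaleR_left)
  have bls: "bounded_linear (\<lambda>y. Pm (s *\<^sub>R y))" for s :: real
    by (rule bounded_linear_compose[OF bl_Pm bounded_linear_scaleR_right])
  have h1: "((\<lambda>y. f (Pm (s *\<^sub>R y)) \<bullet> Pm y) has_derivative blinfun_apply (fx y s)) (at y within UNIV)" for y s
  proof -
    have a: "((\<lambda>y. f (Pm (s *\<^sub>R y))) has_derivative (\<lambda>h. blinfun_apply (f' (Pm (s *\<^sub>R y))) (Pm (s *\<^sub>R h)))) (at y)"
      by (rule has_derivative_compose[OF bounded_linear_imp_has_derivative[OF bls] df])
    have b: "(Pm has_derivative Pm) (at y)" by (rule bounded_linear_imp_has_derivative[OF bl_Pm])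
    have "((\<lambda>y. f (Pm (s *\<^sub>R y)) \<bullet> Pm y) has_derivative
        (\<lambda>h. f (Pm (s *\<^sub>R y)) \<bullet> Pm h + blinfun_apply (f' (Pm (s *\<^sub>R y))) (Pm (s *\<^sub>R h)) \<bullet> Pm y)) (at y)"
      by (rule has_derivative_inner[OF a b])
    moreover have "(\<lambda>h. f (Pm (s *\<^sub>R y)) \<bullet> Pm h + blinfun_apply (f' (Pm (s *\<^sub>R y))) (Pm (s *\<^sub>R h)) \<bullet> Pm y)
        = blinfun_apply (fx y s)"
      by (rule ext) (simp add: fxapp linear_scale[OF linear_Pm] blinfun.scaleR_right)
    ultimately show ?thesis by simp
  qed
  have cP2: "continuous_on S (\<lambda>p. Pm (snd p *\<^sub>R fst p))" for S :: "((real^'m) \<times> real) set"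
    by (rule continuous_on_compose2[OF cPm]) (auto intro!: continuous_intros)
  have cf2: "continuous_on S (\<lambda>p. f' (Pm (snd p *\<^sub>R fst p)))" for S :: "((real^'m) \<times> real) set"
    by (rule continuous_on_compose2[OF cf cP2]) auto
  have cfu2: "continuous_on S (\<lambda>p. f (Pm (snd p *\<^sub>R fst p)))" for S :: "((real^'m) \<times> real) set"
    by (rule continuous_on_compose2[OF cfun cP2]) auto
  have cP1: "continuous_on S (\<lambda>s. Pm (s *\<^sub>R y))" for S :: "real set" and y
    by (rule continuous_on_compose2[OF cPm]) (auto intro!: continuous_intros)
  have cf1: "continuous_on S (\<lambda>s. f' (Pm (s *\<^sub>R y)))" for S :: "real set" and y
    by (rule continuous_on_compose2[OF cf cP1]) auto
  have cfu1: "continuous_on S (\<lambda>s. f (Pm (s *\<^sub>R y)))" for S :: "real set" and y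
    by (rule continuous_on_compose2[OF cfun cP1]) auto
  have cPf: "continuous_on S (\<lambda>p. Pm (fst p))" for S :: "((real^'m) \<times> real) set"
    by (rule continuous_on_compose2[OF cPm]) (auto intro!: continuous_intros)
  have c3: "continuous_on (UNIV \<times> cbox 0 1) (\<lambda>(y, s). fx y s)"
  proof -
    have e: "(\<lambda>(y, s). fx y s) = (\<lambda>p. fx (fst p) (snd p))" by auto
    show ?thesis unfolding e unfolding fx_def
      by (intro continuous_intros cf2 cfu2 cPf)
  qed
  have intf: "(\<lambda>s. f (Pm (s *\<^sub>R y)) \<bullet> Pm y) integrable_on cbox 0 1" for y
    by (rule integrable_continuous) (intro continuous_intros cfu1)
  have intfx: "fx y integrable_on cbox 0 1" for y
    by (rule integrable_continuous) (unfold fx_def, intro continuous_intros cf1 cfu1)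
  have lr: "(g has_derivative blinfun_apply (integral (cbox 0 1) (fx y))) (at y)" for y
    unfolding g_def
    by (rule leibniz_rule) (use h1 intf c3 in auto)
  have ival: "blinfun_apply (integral (cbox 0 1) (fx y)) v = f (Pm y) \<bullet> Pm v" for y v
  proof -
    define D where "D s = s * (blinfun_apply (f' (Pm (s *\<^sub>R y))) (Pm y) \<bullet> Pm v) + f (Pm (s *\<^sub>R y)) \<bullet> Pm v" for s
    define \<phi> where "\<phi> s = s * (f (Pm (s *\<^sub>R y)) \<bullet> Pm v)" for s
    have "blinfun_apply (integral (cbox 0 1) (fx y)) v = integral (cbox 0 1) (\<lambda>s. blinfun_apply (fx y s) v)"
      by (rule blinfun_apply_integral[OF intfx])
    also have "(\<lambda>s. blinfun_apply (fx y s) v) = D"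
      by (rule ext) (simp add: D_def fxapp sym[of _ "Pm v" "Pm y"])
    also have "integral (cbox 0 1) D = \<phi> 1 - \<phi> 0"
    proof -
      have "(\<phi> has_vector_derivative D s) (at s within {0..1})" for s
      proof -
        have a1: "((\<lambda>s. Pm (s *\<^sub>R y)) has_derivative (\<lambda>h. Pm (h *\<^sub>R y))) (at s)"
          by (rule bounded_linear_imp_has_derivative[OF bounded_linear_compose[OF bl_Pm bounded_linear_scaleR_left]])
        have a2: "((\<lambda>s. f (Pm (s *\<^sub>R y))) has_derivative (\<lambda>h. blinfun_apply (f' (Pm (s *\<^sub>R y))) (Pm (h *\<^sub>R y)))) (at s)"
          by (rule has_derivative_compose[OF a1 df])
        have a3: "((\<lambda>s. f (Pm (s *\<^sub>R y)) \<bullet> Pm v) has_derivative (\<lambda>h. blinfun_apply (f' (Pm (s *\<^sub>R y))) (Pm (h *\<^sub>R y)) \<bullet> Pm v)) (at s)"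
          by (rule has_derivative_inner_left[OF a2])
        have a4: "(\<phi> has_derivative (\<lambda>h. s * (blinfun_apply (f' (Pm (s *\<^sub>R y))) (Pm (h *\<^sub>R y)) \<bullet> Pm v) + h * (f (Pm (s *\<^sub>R y)) \<bullet> Pm v))) (at s)"
          unfolding \<phi>_def by (rule has_derivative_mult[OF has_derivative_ident a3])
        have e: "(\<lambda>h. s * (blinfun_apply (f' (Pm (s *\<^sub>R y))) (Pm (h *\<^sub>R y)) \<bullet> Pm v) + h * (f (Pm (s *\<^sub>R y)) \<bullet> Pm v))
            = (\<lambda>h. h *\<^sub>R D s)"
          by (rule ext) (simp add: D_def linear_scale[OF linear_Pm] blinfun.scaleR_right algebra_simps)
        have "(\<phi> has_derivative (\<lambda>h. h *\<^sub>R D s)) (at s)" using a4 unfolding e .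
        then have "(\<phi> has_derivative (\<lambda>h. h *\<^sub>R D s)) (at s within {0..1})"
          by (rule has_derivative_at_withinI)
        then show ?thesis unfolding has_vector_derivative_def .
      qed
      then have "(D has_integral (\<phi> 1 - \<phi> 0)) {0..1}"
        by (intro fundamental_theorem_of_calculus) auto
      then show ?thesis by (simp add: integral_unique)
    qed
    also have "\<phi> 1 - \<phi> 0 = f (Pm y) \<bullet> Pm v" by (simp add: \<phi>_def)
    finally show ?thesis .
  qed
  have dg: "(g has_derivative blinfun_apply (G y)) (at y)" for y
  proof -
    have "integral (cbox 0 1) (fx y) = G y"
      by (rule blinfun_eqI) (simp only: ival Gapp)
    then show ?thesis using lr[of y] by simp
  qed
  define Cm where "Cm z = blinfun_inner_right z o\<^sub>L Blinfun Pm" for z :: "real^('m option)"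
  have blCm: "bounded_linear Cm"
    unfolding Cm_def
    by (rule bounded_linear_compose[OF bounded_bilinear.bounded_linear_left[OF bounded_bilinear_blinfun_compose] bounded_linear_blinfun_inner_right])
  have GCm: "G = (\<lambda>y. Cm (f (Pm y)))" by (rule ext) (simp add: G_def Cm_def)
  define G2 where "G2 y = Blinfun Cm o\<^sub>L f' (Pm y) o\<^sub>L Blinfun Pm" for y
  have G2app: "blinfun_apply (G2 y) = (\<lambda>h. Cm (blinfun_apply (f' (Pm y)) (Pm h)))" for y
    by (rule ext) (simp add: G2_def bounded_linear_Blinfun_apply blCm bl_Pm)
  have dG: "(G has_derivative blinfun_apply (G2 y)) (at y)" for y
    unfolding GCm G2app
    by (rule bounded_linear.has_derivative[OF blCm has_derivative_compose[OF bounded_linear_imp_has_derivative[OF bl_Pm] df]])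
  have cfP: "continuous_on UNIV (\<lambda>y. f' (Pm y))"
    by (rule continuous_on_compose2[OF cf cPm]) auto
  have cG2: "continuous_on UNIV G2"
    unfolding G2_def by (intro continuous_intros cfP)
  have "C2_map g"
    unfolding C2_map_def C1_map_def using dg dG cG2 by blast
  moreover have "partial_deriv g i y = f (Pm y) $ Some i" for y i
    using partial_deriv_eq[OF dg] by (simp add: Gapp inner_axis)
  ultimately show ?thesis by blast
qed


theorem theorem4p2:
  fixes f :: "real^('m::finite option) \<Rightarrow> real^('m option)"
  shows "laplacian_map f \<longleftrightarrow>
    (\<exists>(g :: real^'m \<Rightarrow> real) (k :: real). C2_map g \<and>
       (\<forall>x i. f x $ Some i = partial_deriv g i (\<chi> j. x $ Some j - x $ None)) \<and>
       (\<forall>x. f x $ None = - (\<Sum>i\<in>UNIV. f x $ Some i) + k))"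
proof
  assume L: "laplacian_map f"
  obtain f' where df: "\<forall>x. (f has_derivative blinfun_apply (f' x)) (at x)" and cf: "continuous_on UNIV f'"
    using L unfolding laplacian_map_def C1_map_def by blast
  have lap: "\<And>x. laplacian_matrix (jacobian f (at x))"
    using L unfolding laplacian_map_def by blast
  have symf: "\<And>x a b. blinfun_apply (f' x) a \<bullet> b = blinfun_apply (f' x) b \<bullet> a"
    by (rule forward_facts(1)[OF df[rule_format] lap])
  have onef: "\<And>x. blinfun_apply (f' x) (\<chi> p. 1) = 0"
    by (rule forward_facts(2)[OF df[rule_format] lap])
  obtain g where C2g: "C2_map g" and pd: "\<forall>y i. partial_deriv g i y = f (Pm y) $ Some i"
    using potential[OF df[rule_format] cf symf] by blast
  obtain c where c: "\<forall>x. (\<Sum>p\<in>UNIV. f x $ p) = c"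
    using sum_const[OF df[rule_format] symf onef] by blast
  show "\<exists>(g :: real^'m \<Rightarrow> real) (k :: real). C2_map g \<and>
       (\<forall>x i. f x $ Some i = partial_deriv g i (\<chi> j. x $ Some j - x $ None)) \<and>
       (\<forall>x. f x $ None = - (\<Sum>i\<in>UNIV. f x $ Some i) + k)"
  proof (intro exI[of _ g] exI[of _ c] conjI allI)
    show "C2_map g" by (rule C2g)
  next
    fix x :: "real^('m option)" and i :: 'm
    have a: "(\<chi> j. x $ Some j - x $ None) = Am x" by (simp add: Am_def)
    have "f x = f (Pm (Am x) + (x $ None) *\<^sub>R (\<chi> p. 1))"
      using decomp[of x] by simp
    also have "\<dots> = f (Pm (Am x))"
      by (rule translation_inv[OF df[rule_format] onef])
    finally show "f x $ Some i = partial_deriv g i (\<chi> j. x $ Some j - x $ None)"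
      unfolding a using pd by simp
  next
    fix x :: "real^('m option)"
    have "f x $ None + (\<Sum>i\<in>UNIV. f x $ Some i) = c"
      using c sum_option[of "\<lambda>p. f x $ p"] by simp
    then show "f x $ None = - (\<Sum>i\<in>UNIV. f x $ Some i) + c" by linarith
  qed
next
  assume "\<exists>(g :: real^'m \<Rightarrow> real) (k :: real). C2_map g \<and>
       (\<forall>x i. f x $ Some i = partial_deriv g i (\<chi> j. x $ Some j - x $ None)) \<and>
       (\<forall>x. f x $ None = - (\<Sum>i\<in>UNIV. f x $ Some i) + k)"
  then obtain g :: "real^'m \<Rightarrow> real" and k where
    h: "C2_map g" "\<forall>x i. f x $ Some i = partial_deriv g i (\<chi> j. x $ Some j - x $ None)"
       "\<forall>x. f x $ None = - (\<Sum>i\<in>UNIV. f x $ Some i) + k"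
    by blast
  show "laplacian_map f" by (rule converse_dir[OF h])
qed

end
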